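(* Let $G$ be a tree with vertices $1,2,\ldots,n$ and edges $e_1,\ldots,e_{n-1}$, and let $M$ be its $n\times(n-1)$ vertex-edge incidence matrix. Define the $(n-1)\times n$ matrix $H=[h_{i,j}]$ (rows indexed by edges, columns by vertices) by $$h_{i,j}=\frac{(-1)^{d(e_i,j)}}{n}\begin{cases}|G_T(e_i)| & \text{if } j\in G_H(e_i),\\ |G_H(e_i)| & \text{if } j\in G_T(e_i).\end{cases}$$ Then $HM=I_{n-1}$.
   Context: Each edge is written $e_i=\{l_i,m_i\}$ with $l_i<m_i$. The incidence matrix $M$ has $(i,j)$-entry $1$ if vertex $i$ is incident with edge $e_j$ and $0$ otherwise. $d(u,v)$ denotes the usual graph distance between vertices; for a vertex $j$ and edge $e_i=\{l_i,m_i\}$, $d(j,e_i)=d(e_i,j):=\min\{d(j,l_i),d(j,m_i)\}$. The head component $G_H(e_i)$ is the connected component of $G\setminus e_i$ containing $m_i$; the tail component $G_T(e_i)$ is the component of $G\setminus e_i$ containing $l_i$. $|X|$ denotes the number of vertices of a graph $X$. *)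

theory Defs
  imports Complex_Main
begin

definition adj :: "nat set set \<Rightarrow> nat \<Rightarrow> nat \<Rightarrow> bool" where
  "adj E u v \<longleftrightarrow> {u, v} \<in> E \<and> u \<noteq> v"

definition walk :: "nat set \<Rightarrow> nat set set \<Rightarrow> nat list \<Rightarrow> bool" where
  "walk V E xs \<longleftrightarrow> xs \<noteq> [] \<and> set xs \<subseteq> V \<and>
     (\<forall>i. Suc i < length xs \<longrightarrow> adj E (xs ! i) (xs ! Suc i))"

definition reachable :: "nat set \<Rightarrow> nat set set \<Rightarrow> nat \<Rightarrow> nat \<Rightarrow> bool" where
  "reachable V E u v \<longleftrightarrow> (\<exists>xs. walk V E xs \<and> hd xs = u \<and> last xs = v)"

definition connected_graph :: "nat set \<Rightarrow> nat set set \<Rightarrow> bool" where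
  "connected_graph V E \<longleftrightarrow> (\<forall>u\<in>V. \<forall>v\<in>V. reachable V E u v)"

definition has_cycle :: "nat set \<Rightarrow> nat set set \<Rightarrow> bool" where
  "has_cycle V E \<longleftrightarrow> (\<exists>xs. walk V E xs \<and> distinct xs \<and> length xs \<ge> 3 \<and> adj E (last xs) (hd xs))"

definition is_tree :: "nat set \<Rightarrow> nat set set \<Rightarrow> bool" where
  "is_tree V E \<longleftrightarrow> V \<noteq> {} \<and> (\<forall>e\<in>E. \<exists>u v. e = {u, v} \<and> u \<noteq> v \<and> u \<in> V \<and> v \<in> V)
     \<and> connected_graph V E \<and> \<not> has_cycle V E"

definition gdist :: "nat set \<Rightarrow> nat set set \<Rightarrow> nat \<Rightarrow> nat \<Rightarrow> nat" where
  "gdist V E u v = (LEAST k. \<exists>xs. walk V E xs \<and> hd xs = u \<and> last xs = v \<and> length xs = Suc k)"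

definition component :: "nat set \<Rightarrow> nat set set \<Rightarrow> nat \<Rightarrow> nat set" where
  "component V E u = {v \<in> V. reachable V E u v}"

definition tree_edges :: "nat \<Rightarrow> (nat \<Rightarrow> nat) \<Rightarrow> (nat \<Rightarrow> nat) \<Rightarrow> nat set set" where
  "tree_edges n l m = (\<lambda>i. {l i, m i}) ` {1..n-1}"

definition incidence :: "(nat \<Rightarrow> nat) \<Rightarrow> (nat \<Rightarrow> nat) \<Rightarrow> nat \<Rightarrow> nat \<Rightarrow> real" where
  "incidence l m j k = (if j = l k \<or> j = m k then 1 else 0)"

definition head_comp :: "nat \<Rightarrow> (nat \<Rightarrow> nat) \<Rightarrow> (nat \<Rightarrow> nat) \<Rightarrow> nat \<Rightarrow> nat set" where
  "head_comp n l m i = component {1..n} (tree_edges n l m - {{l i, m i}}) (m i)"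

definition tail_comp :: "nat \<Rightarrow> (nat \<Rightarrow> nat) \<Rightarrow> (nat \<Rightarrow> nat) \<Rightarrow> nat \<Rightarrow> nat set" where
  "tail_comp n l m i = component {1..n} (tree_edges n l m - {{l i, m i}}) (l i)"

definition vedist :: "nat \<Rightarrow> (nat \<Rightarrow> nat) \<Rightarrow> (nat \<Rightarrow> nat) \<Rightarrow> nat \<Rightarrow> nat \<Rightarrow> nat" where
  "vedist n l m j i = min (gdist {1..n} (tree_edges n l m) j (l i)) (gdist {1..n} (tree_edges n l m) j (m i))"

definition Hmat :: "nat \<Rightarrow> (nat \<Rightarrow> nat) \<Rightarrow> (nat \<Rightarrow> nat) \<Rightarrow> nat \<Rightarrow> nat \<Rightarrow> real" where
  "Hmat n l m i j = (-1) ^ vedist n l m j i / real n *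
     (if j \<in> head_comp n l m i then real (card (tail_comp n l m i))
      else if j \<in> tail_comp n l m i then real (card (head_comp n l m i)) else 0)"

end

theory Submission
  imports Defs
begin

lemma walk_Nil[simp]: "\<not> walk V E []" by (simp add: walk_def)

lemma walk_Cons: "walk V E (x#xs) \<longleftrightarrow> x \<in> V \<and> (xs = [] \<or> (adj E x (hd xs) \<and> walk V E xs))"
proof
  assume w: "walk V E (x#xs)"
  show "x \<in> V \<and> (xs = [] \<or> (adj E x (hd xs) \<and> walk V E xs))"
  proof (cases xs)
    case Nil then show ?thesis using w by (simp add: walk_def)
  next
    case (Cons y ys)
    have "adj E x y" using w Cons unfolding walk_def by (metis length_Cons nth_Cons_0 nth_Cons_Suc zero_less_Suc Suc_less_eq)
    moreover have "walk V E xs" using w Cons unfolding walk_def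
      by (metis (no_types, lifting) Suc_less_eq length_Cons list.distinct(1) nth_Cons_Suc set_subset_Cons subset_trans)
    ultimately show ?thesis using w Cons by (simp add: walk_def)
  qed
next
  assume h: "x \<in> V \<and> (xs = [] \<or> (adj E x (hd xs) \<and> walk V E xs))"
  show "walk V E (x#xs)"
  proof (cases xs)
    case Nil then show ?thesis using h by (simp add: walk_def)
  next
    case (Cons y ys)
    show ?thesis unfolding walk_def
    proof (intro conjI allI impI)
      show "set (x # xs) \<subseteq> V" using h Cons by (auto simp: walk_def)
      fix i assume "Suc i < length (x # xs)"
      then show "adj E ((x # xs) ! i) ((x # xs) ! Suc i)"
        using h Cons by (cases i) (auto simp: walk_def)
    qed simp
  qed
qed

lemma walk_single[simp]: "walk V E [x] \<longleftrightarrow> x \<in> V" by (simp add: walk_Cons)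

lemma walk_Cons2[simp]: "walk V E (x#y#xs) \<longleftrightarrow> x \<in> V \<and> adj E x y \<and> walk V E (y#xs)"
  by (simp add: walk_Cons[of V E x])

lemma walk_hd: "walk V E xs \<Longrightarrow> hd xs \<in> V"
  by (cases xs) (auto simp: walk_Cons)

lemma walk_last: "walk V E xs \<Longrightarrow> last xs \<in> V"
  by (auto simp: walk_def)

lemma walk_snoc: "walk V E xs \<Longrightarrow> adj E (last xs) y \<Longrightarrow> y \<in> V \<Longrightarrow> walk V E (xs @ [y])"
proof (induction xs)
  case Nil then show ?case by simp
next
  case (Cons x xs)
  then show ?case by (cases xs) (auto simp: walk_Cons)
qed

lemma walk_prefix: "walk V E (xs @ ys) \<Longrightarrow> xs \<noteq> [] \<Longrightarrow> walk V E xs"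
proof (induction xs)
  case Nil then show ?case by simp
next
  case (Cons x xs)
  then show ?case by (cases xs) (auto simp: walk_Cons)
qed

lemma walk_suffix: "walk V E (xs @ ys) \<Longrightarrow> ys \<noteq> [] \<Longrightarrow> walk V E ys"
proof (induction xs)
  case Nil then show ?case by simp
next
  case (Cons x xs)
  then show ?case by (auto simp: walk_Cons)
qed

lemma walk_append: "walk V E (xs @ [y]) \<Longrightarrow> walk V E (y # ys) \<Longrightarrow> walk V E (xs @ y # ys)"
proof (induction xs)
  case Nil then show ?case by simp
next
  case (Cons x xs)
  then show ?case by (cases xs) (auto simp: walk_Cons)
qed

lemma adj_sym: "adj E u v \<Longrightarrow> adj E v u"
  by (auto simp: adj_def insert_commute)

lemma walk_rev: "walk V E xs \<Longrightarrow> walk V E (rev xs)"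
proof (induction xs)
  case Nil then show ?case by simp
next
  case (Cons x xs)
  show ?case
  proof (cases xs)
    case Nil then show ?thesis using Cons by simp
  next
    case (Cons y ys)
    then have "walk V E (rev xs)" "adj E (hd xs) x" "x \<in> V"
      using Cons.IH Cons.prems by (auto simp: walk_Cons adj_sym)
    then show ?thesis using walk_snoc[of V E "rev xs" x] Cons by (simp add: last_rev)
  qed
qed

lemma walk_mono: "walk V E' xs \<Longrightarrow> E' \<subseteq> E \<Longrightarrow> walk V E xs"
  by (auto simp: walk_def adj_def)

lemma walk_distinct:
  "walk V E xs \<Longrightarrow> \<exists>ys. walk V E ys \<and> distinct ys \<and> hd ys = hd xs \<and> last ys = last xs"
proof (induction "length xs" arbitrary: xs rule: less_induct)
  case less
  show ?case
  proof (cases "distinct xs")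
    case True then show ?thesis using less.prems by blast
  next
    case False
    then obtain p y q r where xs: "xs = p @ [y] @ q @ [y] @ r" using not_distinct_decomp by blast
    have w1: "walk V E (p @ [y])" using less.prems xs walk_prefix[of V E "p @ [y]"] by simp
    have w2: "walk V E (y # r)" using less.prems xs walk_suffix[of V E "p @ y # q" "y # r"] by simp
    have wz: "walk V E (p @ y # r)" using walk_append[OF w1 w2] .
    have "length (p @ y # r) < length xs" using xs by simp
    from less.hyps[OF this wz] obtain ys where "walk V E ys \<and> distinct ys \<and> hd ys = hd (p @ y # r) \<and> last ys = last (p @ y # r)" by blast
    moreover have "hd (p @ y # r) = hd xs" "last (p @ y # r) = last xs" using xs by (cases p; simp)+
    ultimately show ?thesis by metis
  qed
qed

lemma reachable_snoc: "reachable V E r w \<Longrightarrow> adj E w w' \<Longrightarrow> w' \<in> V \<Longrightarrow> reachable V E r w'"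
  unfolding reachable_def
  by (metis walk_snoc append_is_Nil_conv hd_append2 last_snoc walk_Nil)

lemma reachable_refl: "x \<in> V \<Longrightarrow> reachable V E x x"
  unfolding reachable_def by (intro exI[of _ "[x]"]) simp

lemma gdist_le: "walk V E xs \<Longrightarrow> hd xs = u \<Longrightarrow> last xs = v \<Longrightarrow> gdist V E u v \<le> length xs - 1"
  unfolding gdist_def by (rule Least_le) (cases xs, auto)

lemma gdist_ex: "reachable V E u v \<Longrightarrow>
   \<exists>xs. walk V E xs \<and> hd xs = u \<and> last xs = v \<and> length xs = Suc (gdist V E u v)"
  unfolding gdist_def reachable_def
proof (rule LeastI_ex)
  assume "\<exists>xs. walk V E xs \<and> hd xs = u \<and> last xs = v"
  then obtain xs where "walk V E xs \<and> hd xs = u \<and> last xs = v" by blast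
  then show "\<exists>k xs. walk V E xs \<and> hd xs = u \<and> last xs = v \<and> length xs = Suc k"
    by (intro exI[of _ "length xs - 1"] exI[of _ xs]) (cases xs, auto)
qed

lemma gdist_refl: "u \<in> V \<Longrightarrow> gdist V E u u = 0"
  using gdist_le[of V E "[u]" u u] by simp

lemma gdist_sym: "connected_graph V E \<Longrightarrow> u \<in> V \<Longrightarrow> v \<in> V \<Longrightarrow> gdist V E u v = gdist V E v u"
proof -
  have *: "gdist V E u v \<le> gdist V E v u" if h: "connected_graph V E" "u \<in> V" "v \<in> V" for u v
  proof -
    obtain xs where "walk V E xs" "hd xs = v" "last xs = u" "length xs = Suc (gdist V E v u)"
      using gdist_ex[of V E v u] h unfolding connected_graph_def by blast
    then show ?thesis using gdist_le[of V E "rev xs" u v] walk_rev[of V E xs]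
      by (simp add: hd_rev last_rev)
  qed
  assume "connected_graph V E" "u \<in> V" "v \<in> V"
  then show ?thesis using *[of u v] *[of v u] by simp
qed


lemma no_cross:
  assumes tree: "is_tree V E" and e: "{a,b} \<in> E" "a \<noteq> b"
  shows "b \<notin> component V (E - {{a,b}}) a"
proof
  assume "b \<in> component V (E - {{a,b}}) a"
  then obtain ws where ws: "walk V (E - {{a,b}}) ws" "hd ws = a" "last ws = b"
    unfolding component_def reachable_def by blast
  from walk_distinct[OF ws(1)] obtain ds where ds: "walk V (E - {{a,b}}) ds" "distinct ds" "hd ds = a" "last ds = b"
    using ws by metis
  have len: "length ds \<ge> 3"
  proof (cases ds)
    case Nil then show ?thesis using ds by simp
  next
    case (Cons x xs)
    show ?thesis
    proof (cases xs)
      case Nil then show ?thesis using ds Cons e by simp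
    next
      case (Cons y ys)
      show ?thesis
      proof (cases ys)
        case Nil then show ?thesis using ds Cons \<open>ds = x # xs\<close> by (simp add: adj_def)
      next
        case (Cons z zs) then show ?thesis using \<open>ds = x # xs\<close> \<open>xs = y # ys\<close> by simp
      qed
    qed
  qed
  have "walk V E ds" using walk_mono[OF ds(1)] by blast
  moreover have "adj E (last ds) (hd ds)" using ds e by (simp add: adj_def insert_commute)
  ultimately have "has_cycle V E" unfolding has_cycle_def using ds len by blast
  then show False using tree unfolding is_tree_def by blast
qed

lemma cover_aux:
  assumes "{a,b} \<in> E" "a \<in> V" "b \<in> V"
  shows "walk V E ws \<Longrightarrow> hd ws \<in> component V (E - {{a,b}}) a \<union> component V (E - {{a,b}}) b
     \<Longrightarrow> last ws \<in> component V (E - {{a,b}}) a \<union> component V (E - {{a,b}}) b"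
proof (induction ws)
  case Nil then show ?case by simp
next
  case (Cons w ws)
  show ?case
  proof (cases ws)
    case Nil then show ?thesis using Cons by simp
  next
    case (Cons y ys)
    have wy: "adj E w y" "walk V E ws" "y \<in> V" using Cons.prems \<open>ws = y # ys\<close> by (auto simp: walk_Cons)
    have "y \<in> component V (E - {{a,b}}) a \<union> component V (E - {{a,b}}) b"
    proof (cases "{w,y} = {a,b}")
      case True
      then have "y = a \<or> y = b" by (metis doubleton_eq_iff)
      then show ?thesis using assms reachable_refl unfolding component_def by blast
    next
      case False
      then have "adj (E - {{a,b}}) w y" using wy by (auto simp: adj_def)
      then show ?thesis using Cons.prems \<open>ws = y # ys\<close> wy reachable_snoc unfolding component_def by fastforce
    qed
    then show ?thesis using Cons.IH wy \<open>ws = y # ys\<close> by simp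
  qed
qed

lemma cover:
  assumes tree: "is_tree V E" and e: "{a,b} \<in> E" "a \<in> V" "b \<in> V" and x: "x \<in> V"
  shows "x \<in> component V (E - {{a,b}}) a \<union> component V (E - {{a,b}}) b"
proof -
  have "reachable V E a x" using tree e x unfolding is_tree_def connected_graph_def by blast
  then obtain ws where "walk V E ws" "hd ws = a" "last ws = x" unfolding reachable_def by blast
  moreover have "a \<in> component V (E - {{a,b}}) a" using e reachable_refl unfolding component_def by blast
  ultimately show ?thesis using cover_aux[OF e] by blast
qed

lemma find_a:
  assumes e: "{a,b} \<in> E" "a \<noteq> b" "a \<in> V"
  shows "walk V E ws \<Longrightarrow> hd ws \<in> component V (E - {{a,b}}) a \<Longrightarrow> last ws \<notin> component V (E - {{a,b}}) a
    \<Longrightarrow> \<exists>q. walk V E q \<and> hd q = hd ws \<and> last q = a \<and> length q < length ws"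
proof (induction ws)
  case Nil then show ?case by simp
next
  case (Cons w ws)
  show ?case
  proof (cases ws)
    case Nil then show ?thesis using Cons by simp
  next
    case (Cons y ys)
    have wy: "adj E w y" "walk V E ws" "y \<in> V" "w \<in> V" using Cons.prems \<open>ws = y # ys\<close> by (auto simp: walk_Cons)
    show ?thesis
    proof (cases "y \<in> component V (E - {{a,b}}) a")
      case True
      then obtain q where q: "walk V E q" "hd q = y" "last q = a" "length q < length ws"
        using Cons.IH wy Cons.prems \<open>ws = y # ys\<close> by auto
      then have "walk V E (w # q)" using wy by (auto simp: walk_Cons)
      then show ?thesis using q by (intro exI[of _ "w # q"]) auto
    next
      case False
      have "{w,y} = {a,b}"
      proof (rule ccontr)
        assume "{w,y} \<noteq> {a,b}"
        then have "adj (E - {{a,b}}) w y" using wy by (auto simp: adj_def)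
        then show False using Cons.prems wy False reachable_snoc unfolding component_def by fastforce
      qed
      moreover have "y \<noteq> a" using False e reachable_refl unfolding component_def by blast
      ultimately have "w = a" by (metis doubleton_eq_iff)
      then show ?thesis using e \<open>ws = y # ys\<close> by (intro exI[of _ "[a]"]) auto
    qed
  qed
qed

lemma dist_split:
  assumes tree: "is_tree V E" and e: "{a,b} \<in> E" "a \<noteq> b" "a \<in> V" "b \<in> V"
    and x: "x \<in> component V (E - {{a,b}}) a"
  shows "gdist V E x b = gdist V E x a + 1"
proof -
  have xV: "x \<in> V" using x unfolding component_def by blast
  have conn: "connected_graph V E" using tree unfolding is_tree_def by blast
  obtain ws where ws: "walk V E ws" "hd ws = x" "last ws = a" "length ws = Suc (gdist V E x a)"
    using gdist_ex[of V E x a] conn xV e unfolding connected_graph_def by blast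
  have "walk V E (ws @ [b])" using walk_snoc[OF ws(1)] ws e by (simp add: adj_def)
  then have up: "gdist V E x b \<le> gdist V E x a + 1"
    using gdist_le[of V E "ws @ [b]" x b] ws by (cases ws) auto
  obtain vs where vs: "walk V E vs" "hd vs = x" "last vs = b" "length vs = Suc (gdist V E x b)"
    using gdist_ex[of V E x b] conn xV e unfolding connected_graph_def by blast
  have "b \<notin> component V (E - {{a,b}}) a" using no_cross[OF tree e(1,2)] .
  then obtain q where q: "walk V E q" "hd q = x" "last q = a" "length q < length vs"
    using find_a[OF e(1-3) vs(1)] vs x by auto
  have "gdist V E x a \<le> length q - 1" using gdist_le[OF q(1-3)] .
  then have "gdist V E x a < gdist V E x b" using q vs by (cases q) auto
  then show ?thesis using up by simp
qed

lemma opp_sign: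
  assumes tree: "is_tree V E" and e: "{u,v} \<in> E" "u \<noteq> v" "u \<in> V" "v \<in> V" and c: "c \<in> V"
  shows "(-1::real) ^ gdist V E u c + (-1) ^ gdist V E v c = 0"
proof -
  have conn: "connected_graph V E" using tree unfolding is_tree_def by blast
  have s1: "gdist V E u c = gdist V E c u" "gdist V E v c = gdist V E c v"
    using gdist_sym[OF conn] e c by auto
  have "c \<in> component V (E - {{u,v}}) u \<union> component V (E - {{u,v}}) v" using cover[OF tree e(1,3,4) c] .
  then show ?thesis
  proof
    assume "c \<in> component V (E - {{u,v}}) u"
    then have "gdist V E c v = gdist V E c u + 1" using dist_split[OF tree e] by blast
    then show ?thesis using s1 by simp
  next
    assume "c \<in> component V (E - {{u,v}}) v"
    moreover have "{v,u} = {u,v}" by blast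
    ultimately have "gdist V E c u = gdist V E c v + 1" using dist_split[OF tree _ _ e(4,3), of c] e by auto
    then show ?thesis using s1 by simp
  qed
qed


theorem mainTheorem1:
  fixes n :: nat and l m :: "nat \<Rightarrow> nat"
  assumes lm: "\<forall>i\<in>{1..n-1}. l i < m i \<and> l i \<in> {1..n} \<and> m i \<in> {1..n}"
    and distinct_edges: "inj_on (\<lambda>i. {l i, m i}) {1..n-1}"
    and tree: "is_tree {1..n} (tree_edges n l m)"
  shows "\<forall>i\<in>{1..n-1}. \<forall>k\<in>{1..n-1}.
           (\<Sum>j=1..n. Hmat n l m i j * incidence l m j k) = (if i = k then 1 else 0)"
proof (intro ballI)
  fix i k assume i: "i \<in> {1..n-1}" and k: "k \<in> {1..n-1}"
  define V where "V = {1..n}"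
  define E where "E = tree_edges n l m"
  define E' where "E' = E - {{l i, m i}}"
  define T where "T = tail_comp n l m i"
  define Hd where "Hd = head_comp n l m i"
  have treeV: "is_tree V E" using tree by (simp add: V_def E_def)
  have eE: "\<And>k. k \<in> {1..n-1} \<Longrightarrow> {l k, m k} \<in> E" by (auto simp: E_def tree_edges_def)
  have lmi: "l i \<noteq> m i" "l i \<in> V" "m i \<in> V" using bspec[OF lm i] by (auto simp: V_def)
  have lmk: "l k \<noteq> m k" "l k \<in> V" "m k \<in> V" using bspec[OF lm k] by (auto simp: V_def)
  have ei: "{l i, m i} \<in> E" using eE i .
  have ei': "{m i, l i} \<in> E" using ei by (simp add: insert_commute)
  have E'2: "E - {{m i, l i}} = E'" by (simp add: E'_def insert_commute)
  have T_def': "T = component V E' (l i)" by (simp add: T_def tail_comp_def V_def E'_def E_def)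
  have Hd_def': "Hd = component V E' (m i)" by (simp add: Hd_def head_comp_def V_def E'_def E_def)
  have distT: "\<And>x. x \<in> T \<Longrightarrow> gdist V E x (m i) = gdist V E x (l i) + 1"
    using dist_split[OF treeV ei lmi] by (simp add: T_def' E'_def)
  have distH: "\<And>x. x \<in> Hd \<Longrightarrow> gdist V E x (l i) = gdist V E x (m i) + 1"
    using dist_split[OF treeV ei' lmi(1)[symmetric] lmi(3,2)] by (simp add: Hd_def' E'2)
  have disj: "T \<inter> Hd = {}" using distT distH by fastforce
  have cov: "T \<union> Hd = V"
    using cover[OF treeV ei lmi(2,3)] by (auto simp: T_def' Hd_def' E'_def component_def)
  have veT: "\<And>x. x \<in> T \<Longrightarrow> vedist n l m x i = gdist V E x (l i)"
    using distT by (simp add: vedist_def V_def E_def)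
  have veH: "\<And>x. x \<in> Hd \<Longrightarrow> vedist n l m x i = gdist V E x (m i)"
    using distH by (simp add: vedist_def V_def E_def)
  have HT: "\<And>x. x \<in> T \<Longrightarrow> Hmat n l m i x = (-1) ^ gdist V E x (l i) / real n * real (card Hd)"
    using veT disj by (auto simp: Hmat_def T_def Hd_def)
  have HH: "\<And>x. x \<in> Hd \<Longrightarrow> Hmat n l m i x = (-1) ^ gdist V E x (m i) / real n * real (card T)"
    using veH by (auto simp: Hmat_def T_def Hd_def)
  have sum: "(\<Sum>j=1..n. Hmat n l m i j * incidence l m j k) = Hmat n l m i (l k) + Hmat n l m i (m k)"
  proof -
    have "(\<Sum>j=1..n. Hmat n l m i j * incidence l m j k) = (\<Sum>j\<in>{l k, m k}. Hmat n l m i j)"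
      by (rule sum.mono_neutral_cong_right) (use lmk in \<open>auto simp: V_def incidence_def\<close>)
    then show ?thesis using lmk by simp
  qed
  show "(\<Sum>j=1..n. Hmat n l m i j * incidence l m j k) = (if i = k then 1 else 0)"
  proof (cases "i = k")
    case True
    have lT: "l i \<in> T" using lmi reachable_refl by (auto simp: T_def' component_def)
    have mH: "m i \<in> Hd" using lmi reachable_refl by (auto simp: Hd_def' component_def)
    have "card T + card Hd = n"
    proof -
      have "finite T" "finite Hd" using cov by (auto simp: V_def intro: finite_subset)
      then have "card (T \<union> Hd) = card T + card Hd" using disj card_Un_disjoint by blast
      then show ?thesis using cov by (simp add: V_def)
    qed
    moreover have "n > 0" using i by auto
    ultimately have n0: "real n > 0" "real (card T) + real (card Hd) = real n" by simp_all
    have g0: "gdist V E (l i) (l i) = 0" "gdist V E (m i) (m i) = 0" using lmi gdist_refl by auto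
    have "Hmat n l m i (l i) + Hmat n l m i (m i) = (real (card T) + real (card Hd)) / real n"
      using HT[OF lT] HH[OF mH] g0 by (simp add: add_divide_distrib)
    then show ?thesis using True sum n0 by simp
  next
    case False
    have "{l k, m k} \<noteq> {l i, m i}" using inj_onD[OF distinct_edges _ k i] False by blast
    then have adjk: "adj E' (l k) (m k)" using eE[OF k] lmk by (simp add: adj_def E'_def)
    have "l k \<in> T \<union> Hd" using cov lmk by simp
    then show ?thesis
    proof
      assume uT: "l k \<in> T"
      then have vT: "m k \<in> T" using reachable_snoc[OF _ adjk lmk(3)] lmk(3) by (auto simp: T_def' component_def)
      have "(-1::real) ^ gdist V E (l k) (l i) + (-1) ^ gdist V E (m k) (l i) = 0"
        using opp_sign[OF treeV eE[OF k] lmk lmi(2)] .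
      moreover have "Hmat n l m i (l k) + Hmat n l m i (m k) = ((-1::real) ^ gdist V E (l k) (l i) + (-1) ^ gdist V E (m k) (l i)) / real n * real (card Hd)"
        using HT[OF uT] HT[OF vT] by (simp add: add_divide_distrib distrib_right)
      ultimately show ?thesis using False sum by simp
    next
      assume uH: "l k \<in> Hd"
      then have vH: "m k \<in> Hd" using reachable_snoc[OF _ adjk lmk(3)] lmk(3) by (auto simp: Hd_def' component_def)
      have "(-1::real) ^ gdist V E (l k) (m i) + (-1) ^ gdist V E (m k) (m i) = 0"
        using opp_sign[OF treeV eE[OF k] lmk lmi(3)] .
      moreover have "Hmat n l m i (l k) + Hmat n l m i (m k) = ((-1::real) ^ gdist V E (l k) (m i) + (-1) ^ gdist V E (m k) (m i)) / real n * real (card T)"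
        using HH[OF uH] HH[OF vH] by (simp add: add_divide_distrib distrib_right)
      ultimately show ?thesis using False sum by simp
    qed
  qed
qed

end
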